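(* Let $\mathbb{F}$ be a non-Archimedean field and let $1\le s\le n$ be an integer. Then for every non-singular $n\times n$ matrix $T$ over $\mathbb{F}$, $\phi^s(T)=\max_{T_s}\|\det T_s\|$, the maximum taken over all $s\times s$ submatrices $T_s$ of $T$.
   Context: $\mathbb{F}$ carries a non-Archimedean absolute value $\|\cdot\|$. On $\mathbb{F}^n$, $\|x\|=\max_i\|x_i\|$; $\|T\|=\sup_{x\ne0}\|Tx\|/\|x\|$; $I_n=\{T:\|T\|=1=\|\det T\|\}$. Every non-singular $T$ factors as $T=PDQ$ with $P,Q\in I_n$, $D=\mathrm{diag}(\sigma_1,\dots,\sigma_n)$, $\|\sigma_1\|\ge\dots\ge\|\sigma_n\|>0$, and $\alpha_i=\|\sigma_i\|$ (the singular values of $T$) are uniquely determined by $T$. For integer $1\le s\le n$ the singular value function is $\phi^s(T)=\alpha_1\alpha_2\cdots\alpha_s$. *)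

theory Defs
  imports "Jordan_Normal_Form.Determinant" "Jordan_Normal_Form.DL_Submatrix"
begin

definition nonarch_abs :: "('a::field \<Rightarrow> real) \<Rightarrow> bool" where
  "nonarch_abs av \<longleftrightarrow>
     (\<forall>x. av x \<ge> 0) \<and> (\<forall>x. av x = 0 \<longleftrightarrow> x = 0) \<and>
     (\<forall>x y. av (x * y) = av x * av y) \<and>
     (\<forall>x y. av (x + y) \<le> max (av x) (av y))"

definition vnorm :: "('a::field \<Rightarrow> real) \<Rightarrow> 'a vec \<Rightarrow> real" where
  "vnorm av x = Max ((\<lambda>i. av (x $ i)) ` {..<dim_vec x})"

definition opnorm :: "('a::field \<Rightarrow> real) \<Rightarrow> 'a mat \<Rightarrow> real" where
  "opnorm av T = Sup {vnorm av (T *\<^sub>v x) / vnorm av x | x.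
       x \<in> carrier_vec (dim_col T) \<and> x \<noteq> 0\<^sub>v (dim_col T)}"

definition isom_group :: "('a::field \<Rightarrow> real) \<Rightarrow> nat \<Rightarrow> 'a mat set" where
  "isom_group av n = {T \<in> carrier_mat n n. opnorm av T = 1 \<and> av (det T) = 1}"

definition diag_of :: "nat \<Rightarrow> (nat \<Rightarrow> 'a::field) \<Rightarrow> 'a mat" where
  "diag_of n \<sigma> = mat n n (\<lambda>(i,j). if i = j then \<sigma> i else 0)"

definition is_svd_values :: "('a::field \<Rightarrow> real) \<Rightarrow> 'a mat \<Rightarrow> real list \<Rightarrow> bool" where
  "is_svd_values av T \<alpha> \<longleftrightarrow> (let n = dim_row T in
     length \<alpha> = n \<and>
     (\<exists>P Q \<sigma>. P \<in> isom_group av n \<and> Q \<in> isom_group av n \<and>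
        T = P * diag_of n \<sigma> * Q \<and>
        (\<forall>i<n. av (\<sigma> i) = \<alpha> ! i) \<and>
        (\<forall>i j. i \<le> j \<longrightarrow> j < n \<longrightarrow> \<alpha> ! j \<le> \<alpha> ! i) \<and>
        (\<forall>i<n. \<alpha> ! i > 0)))"

definition singular_values :: "('a::field \<Rightarrow> real) \<Rightarrow> 'a mat \<Rightarrow> real list" where
  "singular_values av T = (THE \<alpha>. is_svd_values av T \<alpha>)"

definition sv_fun :: "('a::field \<Rightarrow> real) \<Rightarrow> nat \<Rightarrow> 'a mat \<Rightarrow> real" where
  "sv_fun av s T = (\<Prod>i<s. singular_values av T ! i)"

end

theory Submission
  imports Defs
begin


locale NA =
  fixes av :: "'a::field \<Rightarrow> real"
  assumes na: "nonarch_abs av"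
begin

lemma av_nonneg[simp]: "av x \<ge> 0" using na unfolding nonarch_abs_def by blast
lemma av_zero_iff[simp]: "av x = 0 \<longleftrightarrow> x = 0" using na unfolding nonarch_abs_def by blast
lemma av_mult[simp]: "av (x * y) = av x * av y" using na unfolding nonarch_abs_def by blast
lemma av_add: "av (x + y) \<le> max (av x) (av y)" using na unfolding nonarch_abs_def by blast
lemma av_0[simp]: "av 0 = 0" by simp
lemma av_pos: "x \<noteq> 0 \<Longrightarrow> av x > 0" using av_nonneg[of x] av_zero_iff[of x] by linarith
lemma av_1[simp]: "av 1 = 1"
proof -
  have "av 1 = av 1 * av 1" using av_mult[of 1 1] by simp
  moreover have "av 1 \<noteq> 0" by simp
  ultimately show ?thesis by (metis mult_cancel_left2)
qed
lemma av_minus1[simp]: "av (-1) = 1"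
proof -
  have "av (-1) * av (-1) = 1" using av_mult[of "-1" "-1"] by simp
  moreover have "av (-1) \<ge> 0" by simp
  ultimately show ?thesis by (metis abs_of_nonneg real_sqrt_abs2 real_sqrt_one power2_eq_square)
qed
lemma av_uminus[simp]: "av (- x) = av x"
  using av_mult[of "-1" x] by simp
lemma av_inverse[simp]: "av (inverse x) = inverse (av x)"
proof (cases "x = 0")
  case False
  have h: "av x * av (inverse x) = 1" using av_mult[of x "inverse x"] False by simp
  show ?thesis by (rule inverse_unique[OF h, symmetric])
qed simp
lemma av_divide[simp]: "av (x / y) = av x / av y"
  by (simp add: divide_inverse)
lemma av_diff: "av (x - y) \<le> max (av x) (av y)"
  using av_add[of x "-y"] by simp
lemma av_signof[simp]: "av (signof p) = 1"
  by (simp add: sign_def)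
lemma av_power[simp]: "av (x ^ k) = av x ^ k"
  by (induct k) auto
lemma av_prod: "av (prod f S) = (\<Prod>x\<in>S. av (f x))"
  by (induct S rule: infinite_finite_induct) auto

lemma av_sum_le: assumes "\<And>x. x \<in> S \<Longrightarrow> av (f x) \<le> c" and "0 \<le> c"
  shows "av (sum f S) \<le> c"
  using assms
proof (induct S rule: infinite_finite_induct)
  case (insert x F)
  then have "av (f x) \<le> c" "av (sum f F) \<le> c" by auto
  then show ?case using av_add[of "f x" "sum f F"] insert(1,2) by simp
qed auto

lemma av_prod_le1: assumes "\<And>x. x \<in> S \<Longrightarrow> av (f x) \<le> 1"
  shows "av (prod f S) \<le> 1"
  unfolding av_prod using assms by (intro prod_le_1) auto

definition bnd :: "nat \<Rightarrow> 'a mat \<Rightarrow> bool" where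
  "bnd n P \<longleftrightarrow> P \<in> carrier_mat n n \<and> (\<forall>i<n. \<forall>j<n. av (P $$ (i,j)) \<le> 1)"

definition good :: "nat \<Rightarrow> 'a mat \<Rightarrow> bool" where
  "good n P \<longleftrightarrow> bnd n P \<and> (\<exists>P'. bnd n P' \<and> P' * P = 1\<^sub>m n)"

lemma bnd_mult: assumes "bnd n A" "bnd n B" shows "bnd n (A * B)"
proof -
  have A: "A \<in> carrier_mat n n" and B: "B \<in> carrier_mat n n" using assms bnd_def by auto
  show ?thesis unfolding bnd_def
  proof (intro conjI allI impI)
    show "A * B \<in> carrier_mat n n" using A B by auto
    fix i j assume ij: "i < n" "j < n"
    have "(A * B) $$ (i,j) = (\<Sum>k<n. A $$ (i,k) * B $$ (k,j))"
      using A B ij by (auto simp: scalar_prod_def intro!: sum.cong)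
    also have "av \<dots> \<le> 1"
      by (rule av_sum_le) (use assms ij in \<open>auto simp: bnd_def intro!: mult_le_one\<close>)
    finally show "av ((A * B) $$ (i,j)) \<le> 1" .
  qed
qed

lemma bnd_one: "bnd n (1\<^sub>m n)" unfolding bnd_def by auto

lemma good_one: "good n (1\<^sub>m n)" unfolding good_def using bnd_one[of n] by (intro conjI exI[of _ "1\<^sub>m n"]) auto

lemma good_carrier: "good n P \<Longrightarrow> P \<in> carrier_mat n n" unfolding good_def bnd_def by auto

lemma good_mult: assumes "good n A" "good n B" shows "good n (A * B)"
proof -
  obtain A' where A': "bnd n A'" "A' * A = 1\<^sub>m n" using assms good_def by auto
  obtain B' where B': "bnd n B'" "B' * B = 1\<^sub>m n" using assms good_def by auto
  have c: "A \<in> carrier_mat n n" "B \<in> carrier_mat n n" "A' \<in> carrier_mat n n" "B' \<in> carrier_mat n n"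
    using assms A' B' good_def bnd_def by auto
  have "(B' * A') * (A * B) = B' * ((A' * A) * B)"
    using c by (simp add: assoc_mult_mat[of _ n n _ n _ n])
  also have "\<dots> = 1\<^sub>m n" using c A' B' by simp
  finally show ?thesis unfolding good_def
    using bnd_mult assms A' B' good_def by blast
qed

lemma bnd_transpose: "bnd n A \<Longrightarrow> bnd n (transpose_mat A)"
  unfolding bnd_def by auto

lemma good_transpose: assumes "good n A" shows "good n (transpose_mat A)"
proof -
  obtain A' where A': "bnd n A'" "A' * A = 1\<^sub>m n" using assms good_def by auto
  have c: "A \<in> carrier_mat n n" "A' \<in> carrier_mat n n" using assms A' good_def bnd_def by auto
  have "A * A' = 1\<^sub>m n" using mat_mult_left_right_inverse[OF c(2) c(1) A'(2)] .
  then have "transpose_mat A' * transpose_mat A = 1\<^sub>m n"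
    using transpose_mult[OF c(1) c(2)] by simp
  then show ?thesis unfolding good_def using bnd_transpose assms A' good_def by blast
qed

lemma good_swap: assumes "k < n" "l < n" shows "good n (swaprows_mat n k l)"
proof -
  have b: "bnd n (swaprows_mat n k l)" unfolding bnd_def by auto
  show ?thesis unfolding good_def using b swaprows_mat_inv[OF assms] by blast
qed

lemma det_bnd: assumes "bnd n A" shows "av (det A) \<le> 1"
proof -
  have A: "A \<in> carrier_mat n n" using assms bnd_def by auto
  show ?thesis unfolding det_def'[OF A]
  proof (rule av_sum_le)
    fix p assume "p \<in> {p. p permutes {0..<n}}"
    then have p: "p permutes {0..<n}" by simp
    have "av (\<Prod>i = 0..<n. A $$ (i, p i)) \<le> 1"
      by (rule av_prod_le1) (use assms p permutes_in_image[OF p] in \<open>auto simp: bnd_def\<close>)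
    then show "av (signof p * (\<Prod>i = 0..<n. A $$ (i, p i))) \<le> 1" by simp
  qed simp
qed

lemma good_det: assumes "good n P" shows "av (det P) = 1"
proof -
  obtain P' where P': "bnd n P'" "P' * P = 1\<^sub>m n" using assms good_def by auto
  have c: "P \<in> carrier_mat n n" "P' \<in> carrier_mat n n" using assms P' good_def bnd_def by auto
  have "det P' * det P = 1" using det_mult[OF c(2) c(1)] P' by simp
  then have "av (det P') * av (det P) = 1" by (metis av_mult av_1)
  moreover have "av (det P') \<le> 1" "av (det P) \<le> 1" using det_bnd P' assms good_def by auto
  moreover have "av (det P') \<ge> 0" "av (det P) \<ge> 0" by auto
  ultimately show ?thesis by (metis dual_order.antisym mult_left_le_one_le mult.commute)
qed

end


context NA begin

definition M :: "nat \<Rightarrow> nat \<Rightarrow> 'a mat \<Rightarrow> real" where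
  "M n s A = Max {av (det (submatrix A I J)) | I J.
           I \<subseteq> {..<n} \<and> J \<subseteq> {..<n} \<and> card I = s \<and> card J = s}"

lemma M_set_finite: "finite {av (det (submatrix A I J)) | I J.
           I \<subseteq> {..<n} \<and> J \<subseteq> {..<n} \<and> card I = s \<and> card J = s}"
proof -
  have "{av (det (submatrix A I J)) | I J.
           I \<subseteq> {..<n} \<and> J \<subseteq> {..<n} \<and> card I = s \<and> card J = s}
     \<subseteq> (\<lambda>(I,J). av (det (submatrix A I J))) ` (Pow {..<n} \<times> Pow {..<n})" by auto
  then show ?thesis by (rule finite_subset) auto
qed

lemma M_ge: assumes "I \<subseteq> {..<n}" "J \<subseteq> {..<n}" "card I = s" "card J = s"
  shows "av (det (submatrix A I J)) \<le> M n s A"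
  unfolding M_def by (rule Max_ge[OF M_set_finite]) (use assms in blast)

lemma card_lessThan_subset: "s \<le> n \<Longrightarrow> {..<s} \<subseteq> {..<n::nat} \<and> card {..<s} = s" by auto

lemma M_nonneg: assumes "s \<le> n" shows "0 \<le> M n s A"
  using M_ge[of "{..<s}" n "{..<s}" s A] assms av_nonneg by (meson card_lessThan_subset order.trans)

lemma M_le: assumes "s \<le> n"
  and "\<And>I J. I \<subseteq> {..<n} \<Longrightarrow> J \<subseteq> {..<n} \<Longrightarrow> card I = s \<Longrightarrow> card J = s \<Longrightarrow> av (det (submatrix A I J)) \<le> c"
  shows "M n s A \<le> c"
  unfolding M_def
proof (rule Max.boundedI[OF M_set_finite])
  show "{av (det (submatrix A I J)) | I J.
           I \<subseteq> {..<n} \<and> J \<subseteq> {..<n} \<and> card I = s \<and> card J = s} \<noteq> {}"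
    using card_lessThan_subset[OF assms(1)] by blast
qed (use assms(2) in blast)

end

context NA begin

lemma card_sub: assumes "I \<subseteq> {..<n}" shows "card {i. i < n \<and> i \<in> I} = card I"
proof -
  have "{i. i < n \<and> i \<in> I} = I" using assms by auto
  then show ?thesis by simp
qed

lemma card_UNIV_lt[simp]: "card {i. i < n \<and> i \<in> UNIV} = n" by simp

lemma submatrix_carrier: assumes "A \<in> carrier_mat n m" "I \<subseteq> {..<n}" "J \<subseteq> {..<m}"
  shows "submatrix A I J \<in> carrier_mat (card I) (card J)"
  using assms card_sub[OF assms(2)] card_sub[OF assms(3)] unfolding carrier_mat_def by (simp add: dim_submatrix)

lemma pick_lt: assumes "I \<subseteq> {..<n}" "a < card I" shows "pick I a < n"
  using pick_le[of a n I] card_sub[OF assms(1)] assms(2) by simp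

lemma submatrix_mult: assumes A: "A \<in> carrier_mat n n" and B: "B \<in> carrier_mat n n"
  shows "submatrix (A * B) I J = submatrix A I UNIV * submatrix B UNIV J"
proof -
  have dA: "dim_row (submatrix A I UNIV) = card {i. i < n \<and> i \<in> I}" "dim_col (submatrix A I UNIV) = n"
    using A by (auto simp: dim_submatrix)
  have dB: "dim_row (submatrix B UNIV J) = n" "dim_col (submatrix B UNIV J) = card {i. i < n \<and> i \<in> J}"
    using B by (auto simp: dim_submatrix)
  have dAB: "dim_row (submatrix (A * B) I J) = card {i. i < n \<and> i \<in> I}" "dim_col (submatrix (A * B) I J) = card {i. i < n \<and> i \<in> J}"
    using A B by (auto simp: dim_submatrix)
  show ?thesis
  proof (rule eq_matI)
    show "dim_row (submatrix (A * B) I J) = dim_row (submatrix A I UNIV * submatrix B UNIV J)"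
      using dA dAB by simp
    show "dim_col (submatrix (A * B) I J) = dim_col (submatrix A I UNIV * submatrix B UNIV J)"
      using dB dAB by simp
    fix i j assume "i < dim_row (submatrix A I UNIV * submatrix B UNIV J)"
      "j < dim_col (submatrix A I UNIV * submatrix B UNIV J)"
    then have i: "i < card {i. i < n \<and> i \<in> I}" and j: "j < card {i. i < n \<and> i \<in> J}" using dA dB by auto
    have pi: "pick I i < n" using pick_le[OF i] .
    have pj: "pick J j < n" using pick_le[OF j] .
    have i': "i < card {i. i < dim_row (A * B) \<and> i \<in> I}" using i A by simp
    have j': "j < card {i. i < dim_col (A * B) \<and> i \<in> J}" using j B by simp
    have "submatrix (A * B) I J $$ (i, j) = (A * B) $$ (pick I i, pick J j)"
      by (rule submatrix_index[OF i' j'])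
    also have "\<dots> = (\<Sum>k\<in>{0..<n}. A $$ (pick I i, k) * B $$ (k, pick J j))"
      using A B pi pj by (simp add: scalar_prod_def)
    also have "\<dots> = (\<Sum>k\<in>{0..<n}. submatrix A I UNIV $$ (i, k) * submatrix B UNIV J $$ (k, j))"
    proof (rule sum.cong[OF refl])
      fix k assume k: "k \<in> {0..<n}"
      have "submatrix A I UNIV $$ (i, k) = A $$ (pick I i, pick UNIV k)"
        by (rule submatrix_index) (use i k A in auto)
      moreover have "submatrix B UNIV J $$ (k, j) = B $$ (pick UNIV k, pick J j)"
        by (rule submatrix_index) (use j k B in auto)
      ultimately show "A $$ (pick I i, k) * B $$ (k, pick J j) = submatrix A I UNIV $$ (i, k) * submatrix B UNIV J $$ (k, j)"
        by (simp add: pick_UNIV)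
    qed
    also have "\<dots> = (submatrix A I UNIV * submatrix B UNIV J) $$ (i, j)"
      using i j dA dB by (simp add: scalar_prod_def)
    finally show "submatrix (A * B) I J $$ (i, j) = (submatrix A I UNIV * submatrix B UNIV J) $$ (i, j)" .
  qed
qed

end

context NA begin
lemma rows_det_le: assumes A: "A \<in> carrier_mat n n" and J: "J \<subseteq> {..<n}" "card J = s" and sn: "s \<le> n"
  and f: "\<And>a. a < s \<Longrightarrow> f a < n"
  shows "av (det (mat\<^sub>r s s (\<lambda>a. row (submatrix A UNIV J) (f a)))) \<le> M n s A"
proof -
  let ?B = "submatrix A UNIV J"
  have dB: "dim_row ?B = n" "dim_col ?B = s" using A J card_sub[OF J(1)] by (simp_all add: dim_submatrix)
  let ?R = "mat\<^sub>r s s (\<lambda>a. row ?B (f a))"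
  show ?thesis
  proof (cases "inj_on f {0..<s}")
    case False
    then obtain i j where ij: "i < s" "j < s" "i \<noteq> j" "f i = f j" unfolding inj_on_def by auto
    have "row ?R i = row ?R j" using ij dB by (simp add: row_mat_of_row_fun)
    then have "det ?R = 0" by (rule det_identical_rows[OF mat_row_carrierI ij(3) ij(1) ij(2)])
    then show ?thesis using M_nonneg[OF sn] by simp
  next
    case True
    define K where "K = f ` {0..<s}"
    have cK: "card K = s" unfolding K_def using card_image[OF True] by simp
    have K: "K \<subseteq> {..<n}" unfolding K_def using f by auto
    define g where "g = (\<lambda>a. if a < s then card {k\<in>K. k < f a} else a)"
    have fK: "a < s \<Longrightarrow> f a \<in> K" for a unfolding K_def by auto
    have pg: "a < s \<Longrightarrow> pick K (g a) = f a" for a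
      unfolding g_def using pick_card_in_set[OF fK] by simp
    have gs: "a < s \<Longrightarrow> g a < s" for a
    proof -
      assume a: "a < s"
      have fin: "finite K" by (simp add: K_def)
      have ps: "{k\<in>K. k < f a} \<subset> K"
      proof
        show "{k\<in>K. k < f a} \<subseteq> K" by blast
        show "{k\<in>K. k < f a} \<noteq> K" using fK[OF a] by blast
      qed
      have "card {k\<in>K. k < f a} < card K" by (rule psubset_card_mono[OF fin ps])
      then have lt: "card {k\<in>K. k < f a} < s" using cK by simp
      show ?thesis unfolding g_def using a lt by simp
    qed
    have ginj: "inj_on g {0..<s}"
    proof (rule inj_onI)
      fix a b assume "a \<in> {0..<s}" "b \<in> {0..<s}" "g a = g b"
      then have a: "a < s" and b: "b < s" and e: "g a = g b" by auto
      have "f a = pick K (g a)" using pg[OF a] by simp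
      also have "\<dots> = pick K (g b)" using e by simp
      also have "\<dots> = f b" using pg[OF b] .
      finally have "f a = f b" .
      show "a = b" by (rule inj_onD[OF True \<open>f a = f b\<close>]) (use a b in auto)
    qed
    have gp: "g permutes {0..<s}"
    proof (rule inj_on_nat_permutes[OF ginj])
      show "g \<in> {0..<s} \<rightarrow> {0..<s}" using gs by auto
      show "finite {0..<s}" by simp
      fix i assume "i \<notin> {0..<s}" then have "\<not> i < s" by simp
      then show "g i = i" unfolding g_def by simp
    qed
    have SK: "submatrix A K J \<in> carrier_mat s s" using submatrix_carrier[OF A K J(1)] cK J(2) by simp
    have "?R = mat s s (\<lambda>(a,b). submatrix A K J $$ (g a, b))"
    proof (rule eq_matI)
      fix a b assume ab: "a < dim_row (mat s s (\<lambda>(a,b). submatrix A K J $$ (g a, b)))"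
        "b < dim_col (mat s s (\<lambda>(a,b). submatrix A K J $$ (g a, b)))"
      then have a: "a < s" and b: "b < s" by auto
      have cKn: "card {i. i < dim_row A \<and> i \<in> K} = s" using A card_sub[OF K] cK by simp
      have cJn: "card {i. i < dim_col A \<and> i \<in> J} = s" using A card_sub[OF J(1)] J(2) by simp
      have "?R $$ (a,b) = ?B $$ (f a, b)" using a b dB f[OF a] by simp
      also have "\<dots> = A $$ (pick UNIV (f a), pick J b)"
        by (rule submatrix_index) (use f[OF a] b A cJn in simp_all)
      also have "\<dots> = A $$ (f a, pick J b)" by (simp add: pick_UNIV)
      also have "\<dots> = A $$ (pick K (g a), pick J b)" using pg[OF a] by simp
      also have "\<dots> = submatrix A K J $$ (g a, b)"
        by (rule submatrix_index[symmetric]) (use gs[OF a] b cKn cJn in simp_all)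
      finally show "?R $$ (a,b) = mat s s (\<lambda>(a,b). submatrix A K J $$ (g a, b)) $$ (a,b)"
        using a b by simp
    qed auto
    then have "det ?R = signof g * det (submatrix A K J)"
      using det_permute_rows[OF SK gp] by simp
    then have "av (det ?R) = av (det (submatrix A K J))" by simp
    also have "\<dots> \<le> M n s A" using M_ge[OF K J(1) cK J(2)] .
    finally show ?thesis .
  qed
qed

end

context NA begin
lemma minor_mult_le: assumes X: "bnd n X" and A: "A \<in> carrier_mat n n"
  and IJ: "I \<subseteq> {..<n}" "J \<subseteq> {..<n}" "card I = s" "card J = s" and sn: "s \<le> n"
  shows "av (det (submatrix (X * A) I J)) \<le> M n s A"
proof -
  have Xc: "X \<in> carrier_mat n n" using X bnd_def by auto
  let ?Y = "submatrix X I UNIV"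
  let ?B = "submatrix A UNIV J"
  have Yc: "?Y \<in> carrier_mat s n" using Xc card_sub[OF IJ(1)] IJ(3) unfolding carrier_mat_def by (simp add: dim_submatrix)
  have Bc: "?B \<in> carrier_mat n s" using A card_sub[OF IJ(2)] IJ(4) unfolding carrier_mat_def by (simp add: dim_submatrix)
  have Yb: "a < s \<Longrightarrow> k < n \<Longrightarrow> av (?Y $$ (a,k)) \<le> 1" for a k
  proof -
    assume a: "a < s" and k: "k < n"
    have "pick I a < n" using pick_lt[OF IJ(1)] a IJ(3) by simp
    moreover have "?Y $$ (a,k) = X $$ (pick I a, k)"
      using a k Xc card_sub[OF IJ(1)] IJ(3) by (subst submatrix_index) (auto simp: pick_UNIV)
    ultimately show ?thesis using X k unfolding bnd_def by auto
  qed
  let ?F = "{f. (\<forall>i\<in>{0..<s}. f i \<in> {0..<n}) \<and> (\<forall>i. i \<notin> {0..<s} \<longrightarrow> f i = i)}"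
  have "submatrix (X * A) I J = ?Y * ?B" by (rule submatrix_mult[OF Xc A])
  also have "\<dots> = mat\<^sub>r s s (\<lambda> i. finsum_vec TYPE('a) s (\<lambda>k. ?Y $$ (i,k) \<cdot>\<^sub>v row ?B k) {0 ..< n})"
    by (rule mat_mul_finsum_alt[OF Yc Bc])
  finally have "det (submatrix (X * A) I J) = 
     (\<Sum>f\<in>?F. det (mat\<^sub>r s s (\<lambda>i. ?Y $$ (i, f i) \<cdot>\<^sub>v row ?B (f i))))"
    using det_linear_rows_sum[of "{0..<n}" "\<lambda>i k. ?Y $$ (i,k) \<cdot>\<^sub>v row ?B k" s] Bc by auto
  also have "\<dots> = (\<Sum>f\<in>?F. prod (\<lambda>i. ?Y $$ (i, f i)) {0..<s} * det (mat\<^sub>r s s (\<lambda>i. row ?B (f i))))"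
    by (rule sum.cong[OF refl], rule det_rows_mul) (use Bc in auto)
  finally have eq: "det (submatrix (X * A) I J) = \<dots>" .
  show ?thesis unfolding eq
  proof (rule av_sum_le)
    fix f assume "f \<in> ?F"
    then have f: "\<And>a. a < s \<Longrightarrow> f a < n" by auto
    have "av (prod (\<lambda>i. ?Y $$ (i, f i)) {0..<s}) \<le> 1" 
      by (rule av_prod_le1) (use Yb f in auto)
    moreover have "av (det (mat\<^sub>r s s (\<lambda>i. row ?B (f i)))) \<le> M n s A"
      by (rule rows_det_le[OF A IJ(2) IJ(4) sn f])
    moreover have "av (prod (\<lambda>i. ?Y $$ (i, f i)) {0..<s}) * av (det (mat\<^sub>r s s (\<lambda>i. row ?B (f i))))
       \<le> av (det (mat\<^sub>r s s (\<lambda>i. row ?B (f i))))"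
      by (rule mult_left_le_one_le) (use calculation in auto)
    ultimately show "av (prod (\<lambda>i. ?Y $$ (i, f i)) {0..<s} * det (mat\<^sub>r s s (\<lambda>i. row ?B (f i)))) \<le> M n s A"
      by simp
  qed (rule M_nonneg[OF sn])
qed

lemma M_mult_left: assumes X: "bnd n X" and A: "A \<in> carrier_mat n n" and sn: "s \<le> n"
  shows "M n s (X * A) \<le> M n s A"
  by (rule M_le[OF sn], rule minor_mult_le[OF X A _ _ _ _ sn])

lemma submatrix_transpose: "submatrix (transpose_mat A) I J = transpose_mat (submatrix A J I)"
proof (rule eq_matI)
  fix i j assume "i < dim_row (transpose_mat (submatrix A J I))" "j < dim_col (transpose_mat (submatrix A J I))"
  then have i: "i < card {j. j < dim_col A \<and> j \<in> I}" and j: "j < card {i. i < dim_row A \<and> i \<in> J}"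
    by (simp_all add: dim_submatrix)
  show "submatrix (transpose_mat A) I J $$ (i, j) = transpose_mat (submatrix A J I) $$ (i, j)"
    using i j pick_le[OF i] pick_le[OF j] by (simp add: dim_submatrix submatrix_index)
qed (simp_all add: dim_submatrix)

lemma M_transpose: assumes A: "A \<in> carrier_mat n n" and sn: "s \<le> n"
  shows "M n s (transpose_mat A) = M n s A"
proof -
  have *: "M n s (transpose_mat B) \<le> M n s B" if "B \<in> carrier_mat n n" for B
  proof (rule M_le[OF sn])
    fix I J assume IJ: "I \<subseteq> {..<n}" "J \<subseteq> {..<n}" "card I = s" "card J = s"
    have "det (submatrix (transpose_mat B) I J) = det (submatrix B J I)"
      unfolding submatrix_transpose
      by (rule det_transpose) (use submatrix_carrier[OF that IJ(2) IJ(1)] IJ in simp)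
    then show "av (det (submatrix (transpose_mat B) I J)) \<le> M n s B"
      using M_ge[OF IJ(2) IJ(1) IJ(4) IJ(3)] by simp
  qed
  show ?thesis using *[OF A] *[of "transpose_mat A"] A by fastforce
qed

lemma M_mult_right: assumes X: "bnd n X" and A: "A \<in> carrier_mat n n" and sn: "s \<le> n"
  shows "M n s (A * X) \<le> M n s A"
proof -
  have Xc: "X \<in> carrier_mat n n" using X bnd_def by auto
  have "M n s (A * X) = M n s (transpose_mat (A * X))" using M_transpose[of "A * X" n s] A Xc sn by simp
  also have "transpose_mat (A * X) = transpose_mat X * transpose_mat A" by (rule transpose_mult[OF A Xc])
  also have "M n s \<dots> \<le> M n s (transpose_mat A)"
    by (rule M_mult_left[OF bnd_transpose[OF X] _ sn]) (use A in simp)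
  also have "\<dots> = M n s A" using M_transpose[OF A sn] .
  finally show ?thesis .
qed

lemma M_good: assumes P: "good n P" and Q: "good n Q" and A: "A \<in> carrier_mat n n" and sn: "s \<le> n"
  shows "M n s (P * A * Q) = M n s A"
proof -
  obtain P' where P': "bnd n P'" "P' * P = 1\<^sub>m n" using P good_def by auto
  obtain Q' where Q': "bnd n Q'" "Q' * Q = 1\<^sub>m n" using Q good_def by auto
  have c: "P \<in> carrier_mat n n" "Q \<in> carrier_mat n n" "P' \<in> carrier_mat n n" "Q' \<in> carrier_mat n n"
    using P Q P' Q' good_def bnd_def by auto
  have QQ': "Q * Q' = 1\<^sub>m n" using mat_mult_left_right_inverse[OF c(4) c(2) Q'(2)] .
  have bP: "bnd n P" and bQ: "bnd n Q" using P Q good_def by auto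
  have le1: "M n s (P * A * Q) \<le> M n s A"
  proof -
    have "M n s (P * A * Q) \<le> M n s (P * A)" by (rule M_mult_right[OF bQ _ sn]) (use c A in auto)
    also have "\<dots> \<le> M n s A" by (rule M_mult_left[OF bP A sn])
    finally show ?thesis .
  qed
  have "P' * (P * A * Q) * Q' = A"
  proof -
    have "P' * (P * A * Q) * Q' = (P' * P) * A * (Q * Q')"
      using c A by (simp add: assoc_mult_mat[of _ n n _ n _ n])
    then show ?thesis using P'(2) QQ' A by simp
  qed
  moreover have "M n s (P' * (P * A * Q) * Q') \<le> M n s (P * A * Q)"
  proof -
    have PAQ: "P * A * Q \<in> carrier_mat n n" using c A by auto
    have "M n s (P' * (P * A * Q) * Q') \<le> M n s (P' * (P * A * Q))"
      by (rule M_mult_right[OF Q'(1) _ sn]) (use c PAQ in auto)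
    also have "\<dots> \<le> M n s (P * A * Q)" by (rule M_mult_left[OF P'(1) PAQ sn])
    finally show ?thesis .
  qed
  ultimately show ?thesis using le1 by simp
qed

end

context NA begin

lemma det_zero_row: assumes A: "A \<in> carrier_mat s s" and c: "c < s" and z: "\<And>b. b < s \<Longrightarrow> A $$ (c,b) = 0"
  shows "det A = 0"
  unfolding det_def'[OF A]
proof (rule sum.neutral, rule ballI)
  fix p assume "p \<in> {p. p permutes {0..<s}}"
  then have p: "p permutes {0..<s}" by simp
  have "p c < s" using permutes_in_image[OF p] c by simp
  then have "A $$ (c, p c) = 0" using z by simp
  then have "(\<Prod>i = 0..<s. A $$ (i, p i)) = 0"
    using c by (intro prod_zero) auto
  then show "signof p * (\<Prod>i = 0..<s. A $$ (i, p i)) = 0" by simp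
qed

lemma det_diagonal: assumes A: "A \<in> carrier_mat s s"
  and z: "\<And>a b. a < s \<Longrightarrow> b < s \<Longrightarrow> a \<noteq> b \<Longrightarrow> A $$ (a,b) = 0"
  shows "det A = (\<Prod>a\<in>{0..<s}. A $$ (a,a))"
proof -
  have "upper_triangular A" unfolding upper_triangular_def using A z by auto
  then have "det A = prod_list (diag_mat A)" by (rule det_upper_triangular[OF _ A])
  also have "\<dots> = prod_list (map (\<lambda>a. A $$ (a,a)) [0..<s])" using A by (simp add: diag_mat_def)
  also have "\<dots> = (\<Prod>a\<in>set [0..<s]. A $$ (a,a))" by (rule prod.distinct_set_conv_list[symmetric]) simp
  finally show ?thesis by simp
qed

lemma pick_ge: assumes "a < card I" shows "a \<le> pick I a"
proof -
  have "card {x\<in>I. x < pick I a} = a" by (rule card_pick_le[OF assms])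
  moreover have "card {x\<in>I. x < pick I a} \<le> card {..<pick I a}" by (rule card_mono) auto
  ultimately show ?thesis by simp
qed

lemma pick_lessThan: assumes "a < s" shows "pick {..<s} a = a"
proof -
  have "{x\<in>{..<s}. x < a} = {..<a}" using assms by auto
  then have "card {x\<in>{..<s}. x < a} = a" by simp
  then show ?thesis using pick_card_in_set[of a "{..<s}"] assms by simp
qed

lemma pick_inj: assumes "a < card I" "b < card I" "pick I a = pick I b" shows "a = b"
  using pick_mono_le[of a I b] pick_mono_le[of b I a] assms by (metis nat_neq_iff)

lemma diag_sub_index: assumes I: "I \<subseteq> {..<n}" "card I = s" and J: "J \<subseteq> {..<n}" "card J = s"
  and a: "a < s" and b: "b < s"
  shows "submatrix (diag_of n \<sigma>) I J $$ (a,b) = (if pick I a = pick J b then \<sigma> (pick I a) else 0)"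
proof -
  have cI: "card {i. i < dim_row (diag_of n \<sigma>) \<and> i \<in> I} = s" using card_sub[OF I(1)] I(2) by (simp add: diag_of_def)
  have cJ: "card {i. i < dim_col (diag_of n \<sigma>) \<and> i \<in> J} = s" using card_sub[OF J(1)] J(2) by (simp add: diag_of_def)
  have pI: "pick I a < n" using pick_lt[OF I(1)] a I(2) by simp
  have pJ: "pick J b < n" using pick_lt[OF J(1)] b J(2) by simp
  have "submatrix (diag_of n \<sigma>) I J $$ (a,b) = diag_of n \<sigma> $$ (pick I a, pick J b)"
    by (rule submatrix_index) (use cI cJ a b in simp_all)
  also have "\<dots> = (if pick I a = pick J b then \<sigma> (pick I a) else 0)"
    using pI pJ by (simp add: diag_of_def)
  finally show ?thesis .
qed

lemma det_diag_sub: assumes I: "I \<subseteq> {..<n}" "card I = s"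
  shows "det (submatrix (diag_of n \<sigma>) I I) = (\<Prod>a\<in>{0..<s}. \<sigma> (pick I a))"
proof -
  have c: "submatrix (diag_of n \<sigma>) I I \<in> carrier_mat s s"
    using submatrix_carrier[of "diag_of n \<sigma>" n n I I] I by (simp add: diag_of_def)
  have "det (submatrix (diag_of n \<sigma>) I I) = (\<Prod>a\<in>{0..<s}. submatrix (diag_of n \<sigma>) I I $$ (a,a))"
  proof (rule det_diagonal[OF c])
    fix a b assume "a < s" "b < s" "a \<noteq> b"
    then have "pick I a \<noteq> pick I b" using pick_inj[of a I b] I(2) by auto
    then show "submatrix (diag_of n \<sigma>) I I $$ (a,b) = 0"
      using diag_sub_index[OF I I \<open>a < s\<close> \<open>b < s\<close>] by simp
  qed
  also have "\<dots> = (\<Prod>a\<in>{0..<s}. \<sigma> (pick I a))"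
  proof (rule prod.cong[OF refl])
    fix a assume "a \<in> {0..<s}"
    then show "submatrix (diag_of n \<sigma>) I I $$ (a,a) = \<sigma> (pick I a)"
      using diag_sub_index[OF I I, of a a \<sigma>] by simp
  qed
  finally show ?thesis .
qed

lemma M_diag: assumes sn: "s \<le> n"
  and dec: "\<And>i j. i \<le> j \<Longrightarrow> j < n \<Longrightarrow> av (\<sigma> j) \<le> av (\<sigma> i)"
  shows "M n s (diag_of n \<sigma>) = (\<Prod>i<s. av (\<sigma> i))"
proof (rule antisym)
  show "M n s (diag_of n \<sigma>) \<le> (\<Prod>i<s. av (\<sigma> i))"
  proof (rule M_le[OF sn])
    fix I J assume I: "I \<subseteq> {..<n}" and J: "J \<subseteq> {..<n}" and cI: "card I = s" and cJ: "card J = s"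
    show "av (det (submatrix (diag_of n \<sigma>) I J)) \<le> (\<Prod>i<s. av (\<sigma> i))"
    proof (cases "I = J")
      case True
      have "av (det (submatrix (diag_of n \<sigma>) I J)) = (\<Prod>a\<in>{0..<s}. av (\<sigma> (pick I a)))"
        unfolding True det_diag_sub[OF J cJ] av_prod ..
      also have "\<dots> \<le> (\<Prod>a\<in>{0..<s}. av (\<sigma> a))"
      proof (rule prod_mono, rule conjI)
        fix a assume a: "a \<in> {0..<s}"
        then have "a \<le> pick I a" using pick_ge[of a I] cI by simp
        moreover have "pick I a < n" using pick_lt[OF I] a cI by simp
        ultimately show "av (\<sigma> (pick I a)) \<le> av (\<sigma> a)" by (rule dec)
      qed simp
      finally show ?thesis by (simp add: atLeast0LessThan)
    next
      case False
      have "\<not> I \<subseteq> J"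
      proof
        assume "I \<subseteq> J"
        moreover have "finite J" using J finite_subset by blast
        ultimately have "I = J" using card_subset_eq cI cJ by metis
        then show False using False by simp
      qed
      then obtain i where iI: "i \<in> I" and iJ: "i \<notin> J" by blast
      define c where "c = card {x\<in>I. x < i}"
      have fin: "finite I" using I finite_subset by blast
      have ps: "{x\<in>I. x < i} \<subset> I"
      proof
        show "{x\<in>I. x < i} \<subseteq> I" by blast
        show "{x\<in>I. x < i} \<noteq> I" using iI by blast
      qed
      have cs: "c < s" unfolding c_def using psubset_card_mono[OF fin ps] cI by simp
      have pc: "pick I c = i" unfolding c_def by (rule pick_card_in_set[OF iI])
      have car: "submatrix (diag_of n \<sigma>) I J \<in> carrier_mat s s"
        using submatrix_carrier[of "diag_of n \<sigma>" n n I J] I J cI cJ by (simp add: diag_of_def)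
      have "det (submatrix (diag_of n \<sigma>) I J) = 0"
      proof (rule det_zero_row[OF car cs])
        fix b assume b: "b < s"
        have "pick J b \<in> J" using pick_in_set_le[of b J] b cJ by simp
        then have "pick I c \<noteq> pick J b" using pc iJ by auto
        then show "submatrix (diag_of n \<sigma>) I J $$ (c, b) = 0"
          using diag_sub_index[OF I cI J cJ cs b] by simp
      qed
      then show ?thesis by (simp add: prod_nonneg)
    qed
  qed
next
  have I: "{..<s} \<subseteq> {..<n}" "card {..<s} = s" using sn by auto
  have "(\<Prod>i<s. av (\<sigma> i)) = av (det (submatrix (diag_of n \<sigma>) {..<s} {..<s}))"
    unfolding det_diag_sub[OF I] av_prod by (rule prod.cong) (auto simp: pick_lessThan)
  also have "\<dots> \<le> M n s (diag_of n \<sigma>)" by (rule M_ge[OF I(1) I(1) I(2) I(2)])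
  finally show "(\<Prod>i<s. av (\<sigma> i)) \<le> M n s (diag_of n \<sigma>)" .
qed

end

context NA begin

lemma vnorm_ge: "i < dim_vec x \<Longrightarrow> av (x $ i) \<le> vnorm av x"
  unfolding vnorm_def by (rule Max_ge) auto

lemma vnorm_le: "0 < dim_vec x \<Longrightarrow> (\<And>i. i < dim_vec x \<Longrightarrow> av (x $ i) \<le> c) \<Longrightarrow> vnorm av x \<le> c"
  unfolding vnorm_def by (rule Max.boundedI) auto

lemma vnorm_pos: assumes x: "x \<in> carrier_vec n" "x \<noteq> 0\<^sub>v n" shows "0 < vnorm av x"
proof -
  obtain i where i: "i < n" "x $ i \<noteq> 0" using x by (metis eq_vecI carrier_vecD index_zero_vec(1) index_zero_vec(2))
  have "0 < av (x $ i)" using av_pos[OF i(2)] .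
  also have "\<dots> \<le> vnorm av x" using vnorm_ge[of i x] i x by simp
  finally show ?thesis .
qed

lemma mult_vec_bound: assumes P: "P \<in> carrier_mat n n" and x: "x \<in> carrier_vec n" and n: "0 < n"
  and K: "\<And>i j. i < n \<Longrightarrow> j < n \<Longrightarrow> av (P $$ (i,j)) \<le> K"
  shows "vnorm av (P *\<^sub>v x) \<le> K * vnorm av x"
proof (rule vnorm_le)
  show "0 < dim_vec (P *\<^sub>v x)" using P n by simp
  fix i assume "i < dim_vec (P *\<^sub>v x)"
  then have i: "i < n" using P by simp
  have K0: "0 \<le> K" using K[OF n n] av_nonneg[of "P $$ (0,0)"] by linarith
  have "(P *\<^sub>v x) $ i = (\<Sum>j\<in>{0..<n}. P $$ (i,j) * x $ j)"
    using P x i by (simp add: scalar_prod_def)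
  also have "av \<dots> \<le> K * vnorm av x"
  proof (rule av_sum_le)
    fix j assume "j \<in> {0..<n}"
    then have j: "j < n" by simp
    have "av (P $$ (i,j) * x $ j) = av (P $$ (i,j)) * av (x $ j)" by simp
    also have "\<dots> \<le> K * vnorm av x"
      by (rule mult_mono) (use K[OF i j] vnorm_ge[of j x] x j K0 in auto)
    finally show "av (P $$ (i,j) * x $ j) \<le> K * vnorm av x" .
  next
    have "av (x $ 0) \<le> vnorm av x" using vnorm_ge[of 0 x] x n by simp
    then have "0 \<le> vnorm av x" using av_nonneg[of "x $ 0"] by linarith
    then show "0 \<le> K * vnorm av x" using K0 by simp
  qed
  finally show "av ((P *\<^sub>v x) $ i) \<le> K * vnorm av x" .
qed

lemma good_vnorm: assumes P: "good n P" and x: "x \<in> carrier_vec n" and n: "0 < n"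
  shows "vnorm av (P *\<^sub>v x) = vnorm av x"
proof -
  obtain P' where P': "bnd n P'" "P' * P = 1\<^sub>m n" using P good_def by auto
  have c: "P \<in> carrier_mat n n" "P' \<in> carrier_mat n n" using P P' good_def bnd_def by auto
  have b: "av (P $$ (i,j)) \<le> 1" "av (P' $$ (i,j)) \<le> 1" if "i < n" "j < n" for i j
    using P P' that unfolding good_def bnd_def by auto
  have "vnorm av (P *\<^sub>v x) \<le> 1 * vnorm av x" by (rule mult_vec_bound[OF c(1) x n b(1)])
  moreover have "vnorm av (P' *\<^sub>v (P *\<^sub>v x)) \<le> 1 * vnorm av (P *\<^sub>v x)"
    by (rule mult_vec_bound[OF c(2) _ n b(2)]) (use c x in auto)
  moreover have "P' *\<^sub>v (P *\<^sub>v x) = x"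
    using assoc_mult_mat_vec[OF c(2) c(1) x, symmetric] P'(2) x by simp
  ultimately show ?thesis by simp
qed

lemma unit_ne: assumes "j < n" shows "unit_vec n j \<noteq> (0\<^sub>v n :: 'a vec)"
proof -
  have "unit_vec n j $ j \<noteq> (0\<^sub>v n :: 'a vec) $ j" using assms by simp
  then show ?thesis by metis
qed

lemma good_isom: assumes P: "good n P" and n: "0 < n" shows "P \<in> isom_group av n"
proof -
  have c: "P \<in> carrier_mat n n" using P good_carrier by auto
  have "{vnorm av (P *\<^sub>v x) / vnorm av x | x. x \<in> carrier_vec (dim_col P) \<and> x \<noteq> 0\<^sub>v (dim_col P)} = {1}"
  proof -
    have e: "unit_vec n 0 \<in> carrier_vec n" "unit_vec n 0 \<noteq> 0\<^sub>v n"
      using n unit_ne[of 0 n] by auto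
    have one: "vnorm av (P *\<^sub>v x) / vnorm av x = 1" if "x \<in> carrier_vec n" "x \<noteq> 0\<^sub>v n" for x
      using good_vnorm[OF P that(1) n] vnorm_pos[OF that] by simp
    have dc: "dim_col P = n" using c by simp
    show ?thesis unfolding dc
    proof (rule equalityI)
      show "{vnorm av (P *\<^sub>v x) / vnorm av x | x. x \<in> carrier_vec n \<and> x \<noteq> 0\<^sub>v n} \<subseteq> {1}"
      proof
        fix r assume "r \<in> {vnorm av (P *\<^sub>v x) / vnorm av x | x. x \<in> carrier_vec n \<and> x \<noteq> 0\<^sub>v n}"
        then obtain x where "r = vnorm av (P *\<^sub>v x) / vnorm av x" "x \<in> carrier_vec n" "x \<noteq> 0\<^sub>v n" by blast
        then show "r \<in> {1}" using one by simp
      qed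
      have "1 \<in> {vnorm av (P *\<^sub>v x) / vnorm av x | x. x \<in> carrier_vec n \<and> x \<noteq> 0\<^sub>v n}"
        using one[OF e] e by (intro CollectI exI[of _ "unit_vec n 0"]) simp
      then show "{1} \<subseteq> {vnorm av (P *\<^sub>v x) / vnorm av x | x. x \<in> carrier_vec n \<and> x \<noteq> 0\<^sub>v n}"
        by simp
    qed
  qed
  then have "opnorm av P = 1" unfolding opnorm_def by simp
  then show ?thesis unfolding isom_group_def using c good_det[OF P] by simp
qed

end

context NA begin
lemma isom_good: assumes P: "P \<in> isom_group av n" and n: "0 < n" shows "good n P"
proof -
  have c: "P \<in> carrier_mat n n" and on: "opnorm av P = 1" and d: "av (det P) = 1"
    using P unfolding isom_group_def by auto
  let ?S = "{vnorm av (P *\<^sub>v x) / vnorm av x | x. x \<in> carrier_vec (dim_col P) \<and> x \<noteq> 0\<^sub>v (dim_col P)}"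
  define K where "K = (\<Sum>i<n. \<Sum>j<n. av (P $$ (i,j)))"
  have PK: "av (P $$ (i,j)) \<le> K" if "i < n" "j < n" for i j
  proof -
    have "av (P $$ (i,j)) \<le> (\<Sum>j<n. av (P $$ (i,j)))"
      by (rule member_le_sum) (use that in auto)
    also have "\<dots> \<le> K" unfolding K_def
      by (rule member_le_sum[of i "{..<n}" "\<lambda>i. \<Sum>j<n. av (P $$ (i,j))"]) (use that in \<open>auto intro: sum_nonneg\<close>)
    finally show ?thesis .
  qed
  have bdd: "bdd_above ?S"
  proof (rule bdd_aboveI[of _ K])
    fix r assume "r \<in> ?S"
    then obtain x where x: "x \<in> carrier_vec n" "x \<noteq> 0\<^sub>v n" and r: "r = vnorm av (P *\<^sub>v x) / vnorm av x"
      using c by auto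
    have "vnorm av (P *\<^sub>v x) \<le> K * vnorm av x" by (rule mult_vec_bound[OF c x(1) n PK])
    then show "r \<le> K" unfolding r using vnorm_pos[OF x] by (simp add: divide_le_eq)
  qed
  have ent: "av (P $$ (i,j)) \<le> 1" if ij: "i < n" "j < n" for i j
  proof -
    let ?e = "unit_vec n j"
    have e: "?e \<in> carrier_vec n" "?e \<noteq> 0\<^sub>v n"
      using ij unit_ne[of j n] by auto
    have ve: "vnorm av ?e = 1"
    proof (rule antisym)
      show "vnorm av ?e \<le> 1" by (rule vnorm_le) (use ij in auto)
      show "1 \<le> vnorm av ?e" using vnorm_ge[of j ?e] ij by simp
    qed
    have "(P *\<^sub>v ?e) $ i = P $$ (i,j)"
      using c ij by simp
    then have "av (P $$ (i,j)) \<le> vnorm av (P *\<^sub>v ?e)" using vnorm_ge[of i "P *\<^sub>v ?e"] c ij by simp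
    also have "\<dots> = vnorm av (P *\<^sub>v ?e) / vnorm av ?e" using ve by simp
    also have "\<dots> \<le> Sup ?S" by (rule cSup_upper[OF _ bdd]) (use e c in auto)
    also have "\<dots> = 1" using on unfolding opnorm_def .
    finally show ?thesis .
  qed
  have bP: "bnd n P" unfolding bnd_def using c ent by auto
  have d0: "det P \<noteq> 0" using d by auto
  define P' where "P' = inverse (det P) \<cdot>\<^sub>m adj_mat P"
  have aP: "adj_mat P \<in> carrier_mat n n" using adj_mat(1)[OF c] .
  have "P' * P = inverse (det P) \<cdot>\<^sub>m (adj_mat P * P)"
    unfolding P'_def by (rule mult_smult_assoc_mat[OF aP c])
  also have "\<dots> = 1\<^sub>m n" unfolding adj_mat(3)[OF c]
    by (rule eq_matI) (use d0 in auto)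
  finally have inv: "P' * P = 1\<^sub>m n" .
  have bP': "bnd n P'" unfolding bnd_def
  proof (intro conjI allI impI)
    show "P' \<in> carrier_mat n n" unfolding P'_def using aP by simp
    fix i j assume ij: "i < n" "j < n"
    have n1: "n = Suc (n - 1)" using n by simp
    have md: "mat_delete P j i \<in> carrier_mat (n-1) (n-1)" using mat_delete_carrier[OF c] .
    have bmd: "bnd (n-1) (mat_delete P j i)" unfolding bnd_def
    proof (intro conjI allI impI md)
      fix a b assume ab: "a < n - 1" "b < n - 1"
      have "mat_delete P j i $$ (a,b) = P $$ (if a < j then a else Suc a, if b < i then b else Suc b)"
        unfolding mat_delete_def using c ab by simp
      then show "av (mat_delete P j i $$ (a,b)) \<le> 1" using ent ab by auto
    qed
    have "P' $$ (i,j) = inverse (det P) * ((-1)^(j+i) * det (mat_delete P j i))"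
      unfolding P'_def adj_mat_def cofactor_def using c ij by simp
    then have "av (P' $$ (i,j)) = av (det (mat_delete P j i))" using d by simp
    also have "\<dots> \<le> 1" by (rule det_bnd[OF bmd])
    finally show "av (P' $$ (i,j)) \<le> 1" .
  qed
  show ?thesis unfolding good_def using bP bP' inv by blast
qed

end

context NA begin

definition Lmat :: "nat \<Rightarrow> nat \<Rightarrow> (nat \<Rightarrow> 'a) \<Rightarrow> 'a mat" where
  "Lmat n k c = mat n n (\<lambda>(i,j). if i = j then 1 else if j = k \<and> k < i then c i else 0)"

lemma Lmat_carrier[simp]: "Lmat n k c \<in> carrier_mat n n" unfolding Lmat_def by simp
lemma Lmat_dim[simp]: "dim_row (Lmat n k c) = n" "dim_col (Lmat n k c) = n" unfolding Lmat_def by simp_all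

lemma Lmat_index: "i < n \<Longrightarrow> j < n \<Longrightarrow> Lmat n k c $$ (i,j) = (if i = j then 1 else if j = k \<and> k < i then c i else 0)"
  unfolding Lmat_def by simp

lemma Lmat_mult: assumes A: "A \<in> carrier_mat n m" and k: "k < n" and i: "i < n" and j: "j < m"
  shows "(Lmat n k c * A) $$ (i,j) = A $$ (i,j) + (if k < i then c i * A $$ (k,j) else 0)"
proof -
  have "(Lmat n k c * A) $$ (i,j) = (\<Sum>l\<in>{0..<n}. Lmat n k c $$ (i,l) * A $$ (l,j))"
    using A i j by (simp add: scalar_prod_def)
  also have "\<dots> = (\<Sum>l\<in>{0..<n}. (if l = i then A $$ (l,j) else 0) + (if l = k then (if k < i then c i * A $$ (k,j) else 0) else 0))"
  proof (rule sum.cong[OF refl])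
    fix l assume "l \<in> {0..<n}"
    then have l: "l < n" by simp
    show "Lmat n k c $$ (i,l) * A $$ (l,j) = (if l = i then A $$ (l,j) else 0) + (if l = k then (if k < i then c i * A $$ (k,j) else 0) else 0)"
      unfolding Lmat_index[OF i l] by auto
  qed
  also have "\<dots> = (\<Sum>l\<in>{0..<n}. (if l = i then A $$ (l,j) else 0)) + (\<Sum>l\<in>{0..<n}. (if l = k then (if k < i then c i * A $$ (k,j) else 0) else 0))"
    by (rule sum.distrib)
  also have "\<dots> = A $$ (i,j) + (if k < i then c i * A $$ (k,j) else 0)"
    using i k by simp
  finally show ?thesis .
qed

lemma Lmat_good: assumes k: "k < n" and c: "\<And>i. k < i \<Longrightarrow> i < n \<Longrightarrow> av (c i) \<le> 1"
  shows "good n (Lmat n k c)"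
proof -
  have b: "bnd n (Lmat n k c)" if "\<And>i. k < i \<Longrightarrow> i < n \<Longrightarrow> av (c i) \<le> 1" for c
    unfolding bnd_def using that by (auto simp: Lmat_index)
  have inv: "Lmat n k (\<lambda>i. - c i) * Lmat n k c = 1\<^sub>m n"
  proof (rule eq_matI)
    fix i j assume "i < dim_row (1\<^sub>m n :: 'a mat)" "j < dim_col (1\<^sub>m n :: 'a mat)"
    then have i: "i < n" and j: "j < n" by auto
    show "(Lmat n k (\<lambda>i. - c i) * Lmat n k c) $$ (i,j) = 1\<^sub>m n $$ (i,j)"
      unfolding Lmat_mult[OF Lmat_carrier k i j] using i j k by (auto simp: Lmat_index)
  qed auto
  show ?thesis unfolding good_def using b[OF c] b[of "\<lambda>i. - c i"] c inv by auto
qed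

definition Rmat :: "nat \<Rightarrow> nat \<Rightarrow> (nat \<Rightarrow> 'a) \<Rightarrow> 'a mat" where
  "Rmat n k c = transpose_mat (Lmat n k c)"

lemma Rmat_good: assumes k: "k < n" and c: "\<And>i. k < i \<Longrightarrow> i < n \<Longrightarrow> av (c i) \<le> 1"
  shows "good n (Rmat n k c)"
  unfolding Rmat_def by (rule good_transpose[OF Lmat_good[OF k c]])

lemma Rmat_mult: assumes A: "A \<in> carrier_mat m n" and k: "k < n" and i: "i < m" and j: "j < n"
  shows "(A * Rmat n k c) $$ (i,j) = A $$ (i,j) + (if k < j then c j * A $$ (i,k) else 0)"
proof -
  have At: "transpose_mat A \<in> carrier_mat n m" using A by simp
  have "A * Rmat n k c = transpose_mat (Lmat n k c * transpose_mat A)"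
    unfolding Rmat_def using transpose_mult[OF Lmat_carrier At] A by simp
  then have "(A * Rmat n k c) $$ (i,j) = (Lmat n k c * transpose_mat A) $$ (j,i)"
    using A i j by simp
  also have "\<dots> = A $$ (i,j) + (if k < j then c j * A $$ (i,k) else 0)"
    unfolding Lmat_mult[OF At k j i] using A i j k by simp
  finally show ?thesis .
qed

lemma good_inv: assumes U: "good n U" shows "\<exists>U'. good n U' \<and> U' * U = 1\<^sub>m n \<and> U * U' = 1\<^sub>m n"
proof -
  obtain U' where U': "bnd n U'" "U' * U = 1\<^sub>m n" using U good_def by auto
  have c: "U \<in> carrier_mat n n" "U' \<in> carrier_mat n n" using U U' good_def bnd_def by auto
  have "U * U' = 1\<^sub>m n" using mat_mult_left_right_inverse[OF c(2) c(1) U'(2)] .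
  moreover have "good n U'" unfolding good_def using U' \<open>U * U' = 1\<^sub>m n\<close> U good_def by auto
  ultimately show ?thesis using U' by blast
qed

definition rel :: "nat \<Rightarrow> 'a mat \<Rightarrow> 'a mat \<Rightarrow> bool" where
  "rel n A B \<longleftrightarrow> (\<exists>U V. good n U \<and> good n V \<and> B = U * A * V)"

lemma rel_refl: "A \<in> carrier_mat n n \<Longrightarrow> rel n A A"
  unfolding rel_def by (intro exI[of _ "1\<^sub>m n"]) (auto simp: good_one)

lemma rel_trans: assumes A: "A \<in> carrier_mat n n" and "rel n A B" "rel n B C" shows "rel n A C"
proof -
  obtain U V where UV: "good n U" "good n V" "B = U * A * V" using assms(2) rel_def by auto
  obtain U2 V2 where UV2: "good n U2" "good n V2" "C = U2 * B * V2" using assms(3) rel_def by auto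
  have c: "U \<in> carrier_mat n n" "V \<in> carrier_mat n n" "U2 \<in> carrier_mat n n" "V2 \<in> carrier_mat n n"
    using UV UV2 good_carrier by auto
  have "C = (U2 * U) * A * (V * V2)" unfolding UV2(3) UV(3)
    using c A by (simp add: assoc_mult_mat[of _ n n _ n _ n])
  then show ?thesis unfolding rel_def using good_mult UV UV2 by blast
qed

lemma rel_left: "A \<in> carrier_mat n n \<Longrightarrow> good n U \<Longrightarrow> rel n A (U * A)"
  unfolding rel_def using good_carrier
  by (intro exI[of _ U] exI[of _ "1\<^sub>m n"]) (auto simp: good_one)

lemma rel_right: "A \<in> carrier_mat n n \<Longrightarrow> good n V \<Longrightarrow> rel n A (A * V)"
  unfolding rel_def using good_carrier
  by (intro exI[of _ "1\<^sub>m n"] exI[of _ V]) (auto simp: good_one)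

lemma rel_sym: assumes A: "A \<in> carrier_mat n n" and r: "rel n A B" shows "rel n B A"
proof -
  obtain U V where UV: "good n U" "good n V" "B = U * A * V" using r rel_def by auto
  obtain U' where U': "good n U'" "U' * U = 1\<^sub>m n" using good_inv[OF UV(1)] by auto
  obtain V' where V': "good n V'" "V * V' = 1\<^sub>m n" using good_inv[OF UV(2)] by auto
  have c: "U \<in> carrier_mat n n" "V \<in> carrier_mat n n" "U' \<in> carrier_mat n n" "V' \<in> carrier_mat n n"
    using UV U' V' good_carrier by auto
  have "U' * B * V' = (U' * U) * A * (V * V')" unfolding UV(3)
    using c A by (simp add: assoc_mult_mat[of _ n n _ n _ n])
  also have "\<dots> = A" using U' V' A by simp
  finally show ?thesis unfolding rel_def using U' V' by metis
qed

lemma rel_carrier: assumes A: "A \<in> carrier_mat n n" and r: "rel n A B" shows "B \<in> carrier_mat n n"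
proof -
  obtain U V where UV: "good n U" "good n V" "B = U * A * V" using r rel_def by auto
  have c: "U \<in> carrier_mat n n" "V \<in> carrier_mat n n" using UV good_carrier by auto
  show ?thesis unfolding UV(3) using c A by (meson mult_carrier_mat)
qed

lemma rel_det: assumes A: "A \<in> carrier_mat n n" and r: "rel n A B" shows "av (det B) = av (det A)"
proof -
  obtain U V where UV: "good n U" "good n V" "B = U * A * V" using r rel_def by auto
  have c: "U \<in> carrier_mat n n" "V \<in> carrier_mat n n" using UV good_carrier by auto
  have "det B = det U * det A * det V" unfolding UV(3)
    using c A by (simp add: det_mult[of _ n])
  then show ?thesis using good_det UV by simp
qed

end

context NA begin

definition inv_at :: "nat \<Rightarrow> nat \<Rightarrow> 'a mat \<Rightarrow> bool" where
  "inv_at n k A \<longleftrightarrow> A \<in> carrier_mat n n \<and> det A \<noteq> 0 \<and>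
    (\<forall>i j. i < n \<longrightarrow> j < n \<longrightarrow> (i < k \<or> j < k) \<longrightarrow> i \<noteq> j \<longrightarrow> A $$ (i,j) = 0) \<and>
    (\<forall>i j. i \<le> j \<longrightarrow> j < k \<longrightarrow> av (A $$ (j,j)) \<le> av (A $$ (i,i))) \<and>
    (\<forall>i j. k \<le> i \<longrightarrow> i < n \<longrightarrow> k \<le> j \<longrightarrow> j < n \<longrightarrow> 0 < k \<longrightarrow> av (A $$ (i,j)) \<le> av (A $$ (k-1,k-1))) \<and>
    (\<forall>i<k. A $$ (i,i) \<noteq> 0)"

lemma pivot_exists: assumes k: "k < n"
  shows "\<exists>i0 j0. k \<le> i0 \<and> i0 < n \<and> k \<le> j0 \<and> j0 < n \<and>
     (\<forall>i j. k \<le> i \<longrightarrow> i < n \<longrightarrow> k \<le> j \<longrightarrow> j < n \<longrightarrow> av (A $$ (i,j)) \<le> av (A $$ (i0,j0)))"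
proof -
  let ?S = "{k..<n} \<times> {k..<n}"
  let ?f = "\<lambda>x. av (A $$ x)"
  have fin: "finite (?f ` ?S)" by simp
  have ne: "?f ` ?S \<noteq> {}" using k by auto
  have "Max (?f ` ?S) \<in> ?f ` ?S" by (rule Max_in[OF fin ne])
  then obtain x where x: "x \<in> ?S" "?f x = Max (?f ` ?S)" by auto
  obtain i0 j0 where x': "x = (i0, j0)" by (cases x)
  have "\<forall>i j. k \<le> i \<longrightarrow> i < n \<longrightarrow> k \<le> j \<longrightarrow> j < n \<longrightarrow> av (A $$ (i,j)) \<le> av (A $$ (i0,j0))"
  proof (intro allI impI)
    fix i j assume "k \<le> i" "i < n" "k \<le> j" "j < n"
    then have "(i,j) \<in> ?S" by auto
    then have "?f (i,j) \<le> Max (?f ` ?S)" using fin by (intro Max_ge) auto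
    then show "av (A $$ (i,j)) \<le> av (A $$ (i0,j0))" using x x' by simp
  qed
  then show ?thesis using x x' by (intro exI[of _ i0] exI[of _ j0]) auto
qed

lemma step: assumes I: "inv_at n k A" and k: "k < n"
  shows "\<exists>E. rel n A E \<and> inv_at n (Suc k) E"
proof -
  have A: "A \<in> carrier_mat n n" and dA: "det A \<noteq> 0"
    and Ia: "\<And>i j. i < n \<Longrightarrow> j < n \<Longrightarrow> (i < k \<or> j < k) \<Longrightarrow> i \<noteq> j \<Longrightarrow> A $$ (i,j) = 0"
    and Ib: "\<And>i j. i \<le> j \<Longrightarrow> j < k \<Longrightarrow> av (A $$ (j,j)) \<le> av (A $$ (i,i))"
    and Ic: "\<And>i j. k \<le> i \<Longrightarrow> i < n \<Longrightarrow> k \<le> j \<Longrightarrow> j < n \<Longrightarrow> 0 < k \<Longrightarrow> av (A $$ (i,j)) \<le> av (A $$ (k-1,k-1))"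
    and Id: "\<And>i. i < k \<Longrightarrow> A $$ (i,i) \<noteq> 0"
    using I unfolding inv_at_def by auto
  obtain i0 j0 where i0: "k \<le> i0" "i0 < n" and j0: "k \<le> j0" "j0 < n"
    and pmax: "\<And>i j. k \<le> i \<Longrightarrow> i < n \<Longrightarrow> k \<le> j \<Longrightarrow> j < n \<Longrightarrow> av (A $$ (i,j)) \<le> av (A $$ (i0,j0))"
    using pivot_exists[OF k, of A] by blast
  have pnz: "A $$ (i0,j0) \<noteq> 0"
  proof
    assume z: "A $$ (i0,j0) = 0"
    have "det A = 0"
    proof (rule det_zero_row[OF A k])
      fix j assume j: "j < n"
      show "A $$ (k,j) = 0"
      proof (cases "j < k")
        case True
        then show ?thesis using Ia[OF k j] by simp
      next
        case False
        then have "av (A $$ (k,j)) \<le> 0" using pmax[of k j] j k z by simp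
        then show ?thesis using av_nonneg[of "A $$ (k,j)"] by simp
      qed
    qed
    then show False using dA by simp
  qed
  define B where "B = swaprows_mat n k i0 * A * swaprows_mat n k j0"
  have relB: "rel n A B" unfolding rel_def B_def using good_swap[OF k i0(2)] good_swap[OF k j0(2)] by blast
  have SA: "swaprows k i0 A \<in> carrier_mat n n" using A by simp
  have B': "B = swapcols k j0 (swaprows k i0 A)"
    unfolding B_def swaprows_mat[OF A k i0(2), symmetric] swapcols_mat[OF SA k j0(2)] ..
  have Bc: "B \<in> carrier_mat n n" unfolding B' using SA by simp
  define rr where "rr = (\<lambda>i. if i = k then i0 else if i = i0 then k else i)"
  define cc where "cc = (\<lambda>j. if j = k then j0 else if j = j0 then k else j)"
  have Bidx: "B $$ (i,j) = A $$ (rr i, cc j)" if "i < n" "j < n" for i j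
    unfolding B' rr_def cc_def using that A i0 j0 k by auto
  have rr: "rr i < n" "i < k \<Longrightarrow> rr i = i" "k \<le> i \<Longrightarrow> k \<le> rr i" "rr k = i0" if "i < n" for i
    unfolding rr_def using that i0 by auto
  have cc: "cc j < n" "j < k \<Longrightarrow> cc j = j" "k \<le> j \<Longrightarrow> k \<le> cc j" "cc k = j0" if "j < n" for j
    unfolding cc_def using that j0 by auto
  define p where "p = B $$ (k,k)"
  have p: "p = A $$ (i0, j0)" unfolding p_def using Bidx[OF k k] rr(4)[OF k] cc(4)[OF k] by simp
  have p0: "p \<noteq> 0" using pnz p by simp
  have avp: "0 < av p" using av_pos[OF p0] .
  have B1: "B $$ (i,j) = 0" if ij: "i < n" "j < n" "i < k \<or> j < k" "i \<noteq> j" for i j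
  proof -
    have "rr i < k \<or> cc j < k"
      using ij rr(2)[OF ij(1)] cc(2)[OF ij(2)] by auto
    moreover have "rr i \<noteq> cc j"
    proof (cases "i < k")
      case True
      then show ?thesis using rr(2)[OF ij(1)] cc(2,3)[OF ij(2)] ij by (cases "j < k") auto
    next
      case False
      then have "j < k" using ij by simp
      then show ?thesis using cc(2)[OF ij(2)] rr(3)[OF ij(1)] False by auto
    qed
    ultimately show ?thesis using Bidx[OF ij(1,2)] Ia[OF rr(1)[OF ij(1)] cc(1)[OF ij(2)]] by simp
  qed
  have B2: "av (B $$ (i,j)) \<le> av p" if "k \<le> i" "i < n" "k \<le> j" "j < n" for i j
    using Bidx[of i j] pmax[OF rr(3)[of i] rr(1)[of i] cc(3)[of j] cc(1)[of j]] that p by simp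
  have B3: "B $$ (i,i) = A $$ (i,i)" if "i < k" for i
    using Bidx[of i i] rr(2)[of i] cc(2)[of i] that k by simp
  have B5: "av p \<le> av (A $$ (k-1,k-1))" if "0 < k"
    using Ic[OF i0 j0 that] p by simp
  define lc where "lc = (\<lambda>i. - (B $$ (i,k) / p))"
  define C where "C = Lmat n k lc * B"
  have lc_b: "av (lc i) \<le> 1" if "k < i" "i < n" for i
  proof -
    have "av (lc i) = av (B $$ (i,k)) / av p" unfolding lc_def by simp
    also have "\<dots> \<le> 1" using B2[of i k] that k avp by (simp add: divide_le_eq)
    finally show ?thesis .
  qed
  have relC: "rel n B C" unfolding C_def by (rule rel_left[OF Bc Lmat_good[OF k lc_b]])
  have Cc: "C \<in> carrier_mat n n" unfolding C_def using Bc Lmat_carrier by (meson mult_carrier_mat)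
  have Cidx: "C $$ (i,j) = B $$ (i,j) + (if k < i then lc i * B $$ (k,j) else 0)" if "i < n" "j < n" for i j
    unfolding C_def by (rule Lmat_mult[OF Bc k that])
  have Cik: "C $$ (i,k) = (if k < i then 0 else B $$ (i,k))" if "i < n" for i
    using Cidx[OF that k] p0 unfolding lc_def p_def[symmetric] by auto
  define rc where "rc = (\<lambda>j. - (B $$ (k,j) / p))"
  define E where "E = C * Rmat n k rc"
  have rc_b: "av (rc j) \<le> 1" if "k < j" "j < n" for j
  proof -
    have "av (rc j) = av (B $$ (k,j)) / av p" unfolding rc_def by simp
    also have "\<dots> \<le> 1" using B2[of k j] that k avp by (simp add: divide_le_eq)
    finally show ?thesis .
  qed
  have relE: "rel n C E" unfolding E_def by (rule rel_right[OF Cc Rmat_good[OF k rc_b]])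
  have Eidx: "E $$ (i,j) = C $$ (i,j) + (if k < j then rc j * C $$ (i,k) else 0)" if "i < n" "j < n" for i j
    unfolding E_def by (rule Rmat_mult[OF Cc k that])
  have Ef: "E $$ (i,j) = B $$ (i,j) + (if k < i then lc i * B $$ (k,j) else 0)
      + (if k < j \<and> \<not> k < i then rc j * B $$ (i,k) else 0)" if "i < n" "j < n" for i j
    using Eidx[OF that] Cidx[OF that] Cik[OF that(1)] by auto
  have relAE: "rel n A E" using rel_trans[OF A relB rel_trans[OF Bc relC relE]] .
  have Ec: "E \<in> carrier_mat n n" using rel_carrier[OF A relAE] .
  have dE: "det E \<noteq> 0" using rel_det[OF A relAE] dA by auto
  have Ediag_lt: "E $$ (i,i) = A $$ (i,i)" if "i < k" for i
    using Ef[of i i] that k B3[OF that] by simp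
  have Ekk: "E $$ (k,k) = p" using Ef[OF k k] p_def by simp
  have Ea: "E $$ (i,j) = 0" if ij: "i < n" "j < n" "i < Suc k \<or> j < Suc k" "i \<noteq> j" for i j
  proof (cases "i < k")
    case True
    have "B $$ (i,j) = 0" using B1[OF ij(1,2)] True ij by simp
    moreover have "B $$ (i,k) = 0" using B1[OF ij(1) k] True by simp
    ultimately show ?thesis using Ef[OF ij(1,2)] True by simp
  next
    case False
    show ?thesis
    proof (cases "i = k")
      case True
      then have "j \<noteq> k" using ij by simp
      show ?thesis
      proof (cases "k < j")
        case True
        have "E $$ (i,j) = B $$ (k,j) + rc j * p" using Ef[OF ij(1,2)] \<open>i = k\<close> True p_def by simp
        then show ?thesis unfolding rc_def using p0 by simp
      next
        case False
        then have "j < k" using \<open>j \<noteq> k\<close> by simp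
        then have "B $$ (k,j) = 0" using B1[OF k ij(2)] by simp
        then show ?thesis using Ef[OF ij(1,2)] \<open>i = k\<close> \<open>j < k\<close> by simp
      qed
    next
      case False
      then have ki: "k < i" using \<open>\<not> i < k\<close> by simp
      then have jk: "j \<le> k" using ij by simp
      show ?thesis
      proof (cases "j = k")
        case True
        have "E $$ (i,j) = B $$ (i,k) + lc i * p" using Ef[OF ij(1,2)] ki True p_def by simp
        then show ?thesis unfolding lc_def using p0 by simp
      next
        case False
        then have "j < k" using jk by simp
        have "B $$ (i,j) = 0" using B1[OF ij(1,2)] \<open>j < k\<close> ij by simp
        moreover have "B $$ (k,j) = 0" using B1[OF k ij(2)] \<open>j < k\<close> by simp
        ultimately show ?thesis using Ef[OF ij(1,2)] \<open>j < k\<close> by simp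
      qed
    qed
  qed
  have Eb: "av (E $$ (j,j)) \<le> av (E $$ (i,i))" if ij: "i \<le> j" "j < Suc k" for i j
  proof (cases "j < k")
    case True
    then show ?thesis using Ediag_lt[OF True] Ediag_lt[of i] ij Ib[OF ij(1) True] by simp
  next
    case False
    then have jk: "j = k" using ij by simp
    show ?thesis
    proof (cases "i = k")
      case True then show ?thesis using jk by simp
    next
      case False
      then have ik: "i < k" using ij jk by simp
      then have "av (A $$ (k-1,k-1)) \<le> av (A $$ (i,i))" using Ib[of i "k-1"] by simp
      then show ?thesis using B5 ik jk Ekk Ediag_lt[OF ik] by simp
    qed
  qed
  have Ec': "av (E $$ (i,j)) \<le> av (E $$ (Suc k - 1, Suc k - 1))"
    if ij: "Suc k \<le> i" "i < n" "Suc k \<le> j" "j < n" for i j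
  proof -
    have ki: "k < i" and kj: "k < j" using ij by auto
    have "E $$ (i,j) = B $$ (i,j) + lc i * B $$ (k,j)" using Ef[OF ij(2,4)] ki by simp
    also have "av \<dots> \<le> max (av (B $$ (i,j))) (av (lc i * B $$ (k,j)))" by (rule av_add)
    also have "\<dots> \<le> av p"
    proof (rule max.boundedI)
      show "av (B $$ (i,j)) \<le> av p" using B2[of i j] ij by simp
      have "av (lc i * B $$ (k,j)) = av (lc i) * av (B $$ (k,j))" by simp
      also have "\<dots> \<le> 1 * av p"
        by (rule mult_mono) (use lc_b[OF ki ij(2)] B2[of k j] ij k in auto)
      finally show "av (lc i * B $$ (k,j)) \<le> av p" by simp
    qed
    finally show ?thesis using Ekk by simp
  qed
  have Ed: "E $$ (i,i) \<noteq> 0" if "i < Suc k" for i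
  proof (cases "i < k")
    case True then show ?thesis using Ediag_lt Id by simp
  next
    case False then have "i = k" using that by simp
    then show ?thesis using Ekk p0 by simp
  qed
  have "inv_at n (Suc k) E" unfolding inv_at_def
    using Ec dE Ea Eb Ec' Ed by blast
  then show ?thesis using relAE by blast
qed

end

context NA begin

lemma exist_inv: assumes T: "T \<in> carrier_mat n n" and dT: "det T \<noteq> 0"
  shows "k \<le> n \<Longrightarrow> \<exists>A. rel n T A \<and> inv_at n k A"
proof (induction k)
  case 0
  have "inv_at n 0 T" unfolding inv_at_def using T dT by auto
  then show ?case using rel_refl[OF T] by blast
next
  case (Suc k)
  then obtain A where A: "rel n T A" "inv_at n k A" by auto
  obtain E where E: "rel n A E" "inv_at n (Suc k) E" using step[OF A(2)] Suc(2) by auto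
  have "A \<in> carrier_mat n n" using A(2) inv_at_def by auto
  then have "rel n T E" using rel_trans[OF T A(1) E(1)] by simp
  then show ?case using E(2) by blast
qed

lemma svd_exists: assumes T: "T \<in> carrier_mat n n" and dT: "det T \<noteq> 0" and n: "0 < n"
  shows "\<exists>\<alpha>. is_svd_values av T \<alpha>"
proof -
  obtain A where A: "rel n T A" "inv_at n n A" using exist_inv[OF T dT, of n] by auto
  have Ac: "A \<in> carrier_mat n n" using A(2) inv_at_def by auto
  obtain U V where UV: "good n U" "good n V" "T = U * A * V"
    using rel_sym[OF T A(1)] rel_def by auto
  define \<sigma> where "\<sigma> = (\<lambda>i. A $$ (i,i))"
  have AD: "A = diag_of n \<sigma>"
  proof (rule eq_matI)
    fix i j assume "i < dim_row (diag_of n \<sigma>)" "j < dim_col (diag_of n \<sigma>)"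
    then have ij: "i < n" "j < n" by (auto simp: diag_of_def)
    show "A $$ (i,j) = diag_of n \<sigma> $$ (i,j)"
      using A(2) ij unfolding inv_at_def diag_of_def \<sigma>_def by auto
  qed (use Ac in \<open>auto simp: diag_of_def\<close>)
  define \<alpha> where "\<alpha> = map (\<lambda>i. av (\<sigma> i)) [0..<n]"
  have "is_svd_values av T \<alpha>"
    unfolding is_svd_values_def Let_def
  proof (intro conjI exI)
    show "length \<alpha> = dim_row T" using T \<alpha>_def by simp
    show "U \<in> isom_group av (dim_row T)" using good_isom[OF UV(1) n] T by simp
    show "V \<in> isom_group av (dim_row T)" using good_isom[OF UV(2) n] T by simp
    have dT: "dim_row T = n" using T by simp
    show "T = U * diag_of (dim_row T) \<sigma> * V" unfolding dT using UV(3) AD by simp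
    show "\<forall>i<dim_row T. av (\<sigma> i) = \<alpha> ! i" using T \<alpha>_def by simp
    show "\<forall>i j. i \<le> j \<longrightarrow> j < dim_row T \<longrightarrow> \<alpha> ! j \<le> \<alpha> ! i"
      using A(2) T unfolding inv_at_def \<alpha>_def \<sigma>_def by auto
    show "\<forall>i<dim_row T. 0 < \<alpha> ! i"
      using A(2) T av_pos unfolding inv_at_def \<alpha>_def \<sigma>_def by auto
  qed
  then show ?thesis by blast
qed

lemma svd_prod: assumes S: "is_svd_values av T \<alpha>" and T: "T \<in> carrier_mat n n"
  and s: "1 \<le> s" "s \<le> n"
  shows "(\<Prod>i<s. \<alpha> ! i) = M n s T"
proof -
  have n: "0 < n" using s by simp
  obtain P Q \<sigma> where PQ: "P \<in> isom_group av n" "Q \<in> isom_group av n"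
    "T = P * diag_of n \<sigma> * Q" and a: "\<forall>i<n. av (\<sigma> i) = \<alpha> ! i"
    and dec: "\<forall>i j. i \<le> j \<longrightarrow> j < n \<longrightarrow> \<alpha> ! j \<le> \<alpha> ! i"
    using S T unfolding is_svd_values_def Let_def by auto
  have D: "diag_of n \<sigma> \<in> carrier_mat n n" by (simp add: diag_of_def)
  have "M n s T = M n s (diag_of n \<sigma>)"
    unfolding PQ(3) by (rule M_good[OF isom_good[OF PQ(1) n] isom_good[OF PQ(2) n] D s(2)])
  also have "\<dots> = (\<Prod>i<s. av (\<sigma> i))"
    by (rule M_diag[OF s(2)]) (use a dec in auto)
  also have "\<dots> = (\<Prod>i<s. \<alpha> ! i)" using a s by (intro prod.cong) auto
  finally show ?thesis by simp
qed

lemma svd_unique: assumes S1: "is_svd_values av T \<alpha>" and S2: "is_svd_values av T \<beta>"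
  and T: "T \<in> carrier_mat n n"
  shows "\<alpha> = \<beta>"
proof -
  have l: "length \<alpha> = n" "length \<beta> = n" using S1 S2 T unfolding is_svd_values_def Let_def by auto
  have pa: "\<forall>i<n. 0 < \<alpha> ! i" and pb: "\<forall>i<n. 0 < \<beta> ! i"
    using S1 S2 T unfolding is_svd_values_def Let_def by auto
  have "\<forall>j<i. \<alpha> ! j = \<beta> ! j" if "i \<le> n" for i
    using that
  proof (induction i)
    case 0 then show ?case by simp
  next
    case (Suc i)
    then have IH: "\<forall>j<i. \<alpha> ! j = \<beta> ! j" and i: "i < n" by auto
    have e1: "(\<Prod>j<i. \<alpha> ! j) = (\<Prod>j<i. \<beta> ! j)" using IH by (intro prod.cong) auto
    have "(\<Prod>j<Suc i. \<alpha> ! j) = M n (Suc i) T" by (rule svd_prod[OF S1 T]) (use i in auto)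
    also have "\<dots> = (\<Prod>j<Suc i. \<beta> ! j)" by (rule svd_prod[OF S2 T, symmetric]) (use i in auto)
    finally have eq: "(\<Prod>j<i. \<alpha> ! j) * \<alpha> ! i = (\<Prod>j<i. \<beta> ! j) * \<beta> ! i" by simp
    have pos: "0 < (\<Prod>j<i. \<beta> ! j)" using pb i by (intro prod_pos) auto
    have eq2: "(\<Prod>j<i. \<beta> ! j) * \<alpha> ! i = (\<Prod>j<i. \<beta> ! j) * \<beta> ! i" using eq unfolding e1 .
    have "\<alpha> ! i = \<beta> ! i" using eq2 pos by (metis mult_left_cancel less_irrefl)
    then show ?case using IH less_Suc_eq by auto
  qed
  then show ?thesis using l by (intro nth_equalityI) auto
qed

end

theorem lemma3p2:
  fixes av :: "'a::field \<Rightarrow> real" and T :: "'a mat" and n s :: nat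
  assumes "nonarch_abs av"
    and "1 \<le> s" and "s \<le> n"
    and "T \<in> carrier_mat n n" and "det T \<noteq> 0"
  shows "sv_fun av s T =
    Max {av (det (submatrix T I J)) | I J.
           I \<subseteq> {..<n} \<and> J \<subseteq> {..<n} \<and> card I = s \<and> card J = s}"
proof -
  interpret NA av by (rule NA.intro[OF assms(1)])
  have n: "0 < n" using assms by simp
  obtain \<alpha> where a: "is_svd_values av T \<alpha>" using svd_exists[OF assms(4,5) n] by auto
  have "singular_values av T = \<alpha>" unfolding singular_values_def
    using a svd_unique[OF _ a assms(4)] by (intro the_equality) blast+
  then have "sv_fun av s T = (\<Prod>i<s. \<alpha> ! i)" unfolding sv_fun_def by simp
  also have "\<dots> = M n s T" by (rule svd_prod[OF a assms(4,2,3)])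
  finally show ?thesis unfolding M_def .
qed


end
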